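(* Let $f$ be continuous on $[0,1]$, and let $w(x):=\int_0^x f(s)\,ds$ and $\overline{w}:=\int_0^1 w(x)\,dx$. Let $n\ge 2$, $h=1/n$, $x_j=jh$ ($j=0,\dots,n$). Let $\mathcal{M}_h$ be the space of continuous functions on $[0,1]$ that are linear on each $[x_{j-1},x_j]$ and vanish at $0$ and $1$, and let $V_h$ be the space of continuous functions on $[0,1]$ that are quadratic on each $[x_{j-1},x_j]$ and vanish at $0$ and $1$. Let $(w_h,u_h)\in V_h\times\mathcal{M}_h$ be the solution of the reduced discrete problem $$\begin{aligned} (w_h',v_h')+(u_h',v_h)&=(f,v_h)&&\text{for all } v_h\in V_h,\\ (w_h,q_h')&=0&&\text{for all } q_h\in\mathcal{M}_h. \end{aligned}$$ Let $\tilde{\mathcal{M}}_h:=\{v_h: v_h \text{ continuous on } [0,1], \text{ linear on each } [x_{j-1},x_j],\ v_h(0)=v_h(1)\}$. Then $u_h-\overline{u}_h$, where $\overline{u}_h=\int_0^1 u_h(x)\,dx$, is the $L^2(0,1)$-orthogonal projection of $w-\overline{w}$ onto $\tilde{\mathcal{M}}_h$.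
   Context: $(\cdot,\cdot)$ denotes the $L^2(0,1)$ inner product. *)

theory Defs
  imports "HOL-Analysis.Analysis"
begin

definition piecewise_poly :: "nat \<Rightarrow> nat \<Rightarrow> (real \<Rightarrow> real) \<Rightarrow> bool" where
  "piecewise_poly n d g \<longleftrightarrow>
     continuous_on {0..1} g \<and>
     (\<forall>j\<in>{1..n}. \<exists>c :: nat \<Rightarrow> real.
        \<forall>x\<in>{(real j - 1) / real n .. real j / real n}. g x = (\<Sum>i\<le>d. c i * x ^ i))"

definition Mh :: "nat \<Rightarrow> (real \<Rightarrow> real) set" where
  "Mh n = {g. piecewise_poly n 1 g \<and> g 0 = 0 \<and> g 1 = 0}"

definition Vh :: "nat \<Rightarrow> (real \<Rightarrow> real) set" where
  "Vh n = {g. piecewise_poly n 2 g \<and> g 0 = 0 \<and> g 1 = 0}"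

definition Mh_tilde :: "nat \<Rightarrow> (real \<Rightarrow> real) set" where
  "Mh_tilde n = {g. piecewise_poly n 1 g \<and> g 0 = g 1}"

definition L2ip :: "(real \<Rightarrow> real) \<Rightarrow> (real \<Rightarrow> real) \<Rightarrow> real" where
  "L2ip f g = integral {0..1} (\<lambda>x. f x * g x)"

definition is_L2_proj :: "(real \<Rightarrow> real) set \<Rightarrow> (real \<Rightarrow> real) \<Rightarrow> (real \<Rightarrow> real) \<Rightarrow> bool" where
  "is_L2_proj S phi P \<longleftrightarrow> P \<in> S \<and> (\<forall>q\<in>S. L2ip (\<lambda>x. phi x - P x) q = 0)"

end

theory Submission
  imports Defs
begin

lemma cell_of:
  assumes "n \<ge> 1" "0 < x" "x < 1" "x \<notin> (\<lambda>j. real j / real n) ` {..n}"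
  shows "\<exists>j\<in>{1..n}. (real j - 1)/real n < x \<and> x < real j / real n"
proof -
  define k where "k = \<lceil>x * real n\<rceil>"
  have np: "real n > 0" using assms(1) by simp
  have xn0: "0 < x * real n" using assms np by simp
  have xnn: "x * real n < real n" using assms np by simp
  have k1: "of_int k - 1 < x * real n" "x * real n \<le> of_int k" unfolding k_def
    by linarith+
  have "real_of_int k > 0" using xn0 k1 by linarith
  then have kpos: "k > 0" by simp
  have "real_of_int k < real_of_int (int n + 1)" using k1 xnn by simp
  then have kn: "k \<le> int n" by linarith
  have rk: "real (nat k) = real_of_int k" using kpos by simp
  have "x * real n \<noteq> of_int k"
  proof
    assume h: "x * real n = of_int k"
    have "nat k \<le> n" using kn by simp
    moreover have "x = real (nat k) / real n" using h np rk by (simp add: field_simps)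
    ultimately show False using assms(4) by auto
  qed
  with k1 have k2: "x * real n < of_int k" by simp
  have "(real (nat k) - 1)/real n < x" "x < real (nat k) / real n"
    using k1 k2 np rk by (simp_all add: field_simps)
  moreover have "nat k \<in> {1..n}" using kpos kn by auto
  ultimately show ?thesis by blast
qed

lemma poly_deriv_cell:
  assumes "\<forall>x\<in>{a..b}. g x = (\<Sum>i\<le>d. c i * x^i)" "a < y" "y < b"
  shows "(g has_real_derivative (\<Sum>i\<le>d. c i * (real i * y^(i-1)))) (at y)"
proof -
  have "((\<lambda>x. \<Sum>i\<le>d. c i * x^i) has_real_derivative (\<Sum>i\<le>d. c i * (real i * y^(i-1)))) (at y)"
    by (auto intro!: derivative_eq_intros simp: mult_ac)
  then show ?thesis
    by (rule has_field_derivative_transform_within_open[where S="{a<..<b}"])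
       (use assms in auto)
qed

lemma pp_deriv:
  assumes "piecewise_poly n d g" "n \<ge> 1" "0 < x" "x < 1"
    "x \<notin> (\<lambda>j. real j / real n) ` {..n}"
  shows "(g has_real_derivative deriv g x) (at x)"
proof -
  obtain j where j: "j \<in> {1..n}" "(real j - 1)/real n < x" "x < real j / real n"
    using cell_of assms(2-5) by blast
  then obtain c where "\<forall>x\<in>{(real j - 1) / real n .. real j / real n}. g x = (\<Sum>i\<le>d. c i * x ^ i)"
    using assms(1) unfolding piecewise_poly_def by blast
  from poly_deriv_cell[OF this j(2,3)] show ?thesis
    using DERIV_imp_deriv by metis
qed

lemma cells_integrable:
  fixes F :: "real \<Rightarrow> real"
  assumes "n \<ge> 1" "\<And>j. j \<in> {1..n} \<Longrightarrow> F integrable_on {(real j - 1)/real n..real j/real n}"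
  shows "F integrable_on {0..1}"
proof -
  have "k \<le> n \<Longrightarrow> F integrable_on {0..real k/real n}" for k
  proof (induction k)
    case 0
    have "F integrable_on cbox 0 0" by (rule integrable_on_refl)
    then show ?case by simp
  next
    case (Suc k)
    have "F integrable_on {(real (Suc k) - 1)/real n..real (Suc k)/real n}"
      using assms(2)[of "Suc k"] Suc.prems by auto
    then have "F integrable_on {real k/real n..real (Suc k)/real n}" by simp
    moreover have "real k / real n \<le> real (Suc k) / real n"
      by (simp add: divide_right_mono)
    ultimately show ?case using Suc Henstock_Kurzweil_Integration.integrable_combine[where a=0 and c="real k/real n" and b="real (Suc k)/real n" and f=F]
      by auto
  qed
  from this[of n] show ?thesis using assms(1) by simp
qed

lemma cell_bounds:
  assumes "j \<in> {1..n}"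
  shows "0 \<le> (real j - 1)/real n" "(real j - 1)/real n \<le> real j/real n" "real j/real n \<le> 1"
proof -
  have j1: "real j \<ge> 1" "real j \<le> real n" using assms by auto
  show "0 \<le> (real j - 1)/real n" using j1 by (intro divide_nonneg_nonneg) auto
  show "(real j - 1)/real n \<le> real j/real n" by (intro divide_right_mono) auto
  show "real j/real n \<le> 1" using j1 by (cases "n = 0") auto
qed

lemma pp_int:
  assumes "piecewise_poly n d g" "n \<ge> 1" "continuous_on {0..1} h"
  shows "(\<lambda>x. h x * deriv g x) integrable_on {0..1}"
proof (rule cells_integrable[OF assms(2)])
  fix j assume j: "j \<in> {1..n}"
  define a where "a = (real j - 1)/real n"
  define b where "b = real j/real n"
  have ab: "0 \<le> a" "a \<le> b" "b \<le> 1" unfolding a_def b_def using cell_bounds[OF j] by auto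
  obtain c where c: "\<forall>x\<in>{a..b}. g x = (\<Sum>i\<le>d. c i * x ^ i)"
    using assms(1) j unfolding piecewise_poly_def a_def b_def by blast
  have sub: "{a..b} \<subseteq> {0..1}" using ab by auto
  have fI: "(\<lambda>x. h x * (\<Sum>i\<le>d. c i * (real i * x^(i-1)))) integrable_on {a..b}"
    by (rule integrable_continuous_interval)
       (intro continuous_intros continuous_on_subset[OF assms(3) sub])
  have fE: "h x * deriv g x = h x * (\<Sum>i\<le>d. c i * (real i * x^(i-1)))"
    if "x \<in> {a..b} - {a,b}" for x
  proof -
    have "a < x" "x < b" using that by auto
    from poly_deriv_cell[OF c this] have "deriv g x = (\<Sum>i\<le>d. c i * (real i * x^(i-1)))"
      by (rule DERIV_imp_deriv)
    then show ?thesis by simp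
  qed
  show "(\<lambda>x. h x * deriv g x) integrable_on {a..b}"
    by (rule integrable_spike_finite[where S="{a,b}", OF _ fE fI]) auto
qed

lemma pp_shift:
  assumes "piecewise_poly n d g"
  shows "piecewise_poly n d (\<lambda>x. g x - k)"
  unfolding piecewise_poly_def
proof (intro conjI ballI)
  show "continuous_on {0..1} (\<lambda>x. g x - k)"
    using assms unfolding piecewise_poly_def by (intro continuous_intros) auto
next
  fix j assume "j \<in> {1..n}"
  then obtain c where c: "\<forall>x\<in>{(real j - 1) / real n .. real j / real n}. g x = (\<Sum>i\<le>d. c i * x ^ i)"
    using assms unfolding piecewise_poly_def by blast
  show "\<exists>c. \<forall>x\<in>{(real j - 1) / real n .. real j / real n}. g x - k = (\<Sum>i\<le>d. c i * x ^ i)"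
  proof (intro exI[of _ "c(0 := c 0 - k)"] ballI)
    fix x assume x: "x \<in> {(real j - 1) / real n .. real j / real n}"
    have "(\<Sum>i\<le>d. (c(0 := c 0 - k)) i * x ^ i) = (\<Sum>i\<le>d. c i * x ^ i - (if i = 0 then k else 0))"
      by (intro sum.cong) auto
    also have "\<dots> = (\<Sum>i\<le>d. c i * x ^ i) - k"
      by (simp add: sum_subtractf)
    finally show "g x - k = (\<Sum>i\<le>d. (c(0 := c 0 - k)) i * x ^ i)" using c x by simp
  qed
qed

lemma sum2: "(\<Sum>i\<le>2. c i * (x::real) ^ i) = c 0 + c 1 * x + c 2 * x^2"
  by (simp add: numeral_2_eq_2)

lemma sum1: "(\<Sum>i\<le>1. c i * (x::real) ^ i) = c 0 + c 1 * x"
  by simp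


lemma v_poly_cell:
  fixes r :: "real \<Rightarrow> real"
  assumes rc: "continuous_on {0..1} r" and ab: "0 \<le> a" "a \<le> b" "b \<le> 1"
    and lin: "\<forall>x\<in>{a..b}. r x = A + B * x"
  shows "\<exists>c. \<forall>x\<in>{a..b}. integral {0..x} r = (\<Sum>i\<le>2. c i * x ^ i)"
proof -
  define F where "F s = A * s + B / 2 * s^2" for s :: real
  define c :: "nat \<Rightarrow> real" where "c i = (if i = 0 then integral {0..a} r - F a else if i = 1 then A else B/2)" for i
  show ?thesis
  proof (intro exI[of _ c] ballI)
    fix x assume x: "x \<in> {a..b}"
    have ri: "r integrable_on {0..x}"
      using x ab by (intro integrable_continuous_interval continuous_on_subset[OF rc]) auto
    have "integral {0..x} r = integral {0..a} r + integral {a..x} r"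
      using Henstock_Kurzweil_Integration.integral_combine[where a=0 and c=a and b=x and f=r] ri x ab by auto
    moreover have "integral {a..x} r = integral {a..x} (\<lambda>s. A + B * s)"
      using lin x by (intro integral_cong) auto
    moreover have "((\<lambda>s. A + B * s) has_integral (F x - F a)) {a..x}"
    proof (rule fundamental_theorem_of_calculus)
      show "a \<le> x" using x by auto
      fix s assume "s \<in> {a..x}"
      show "(F has_vector_derivative A + B * s) (at s within {a..x})"
        unfolding F_def
        by (auto intro!: derivative_eq_intros simp flip: has_real_derivative_iff_has_vector_derivative)
    qed
    ultimately have "integral {0..x} r = integral {0..a} r + F x - F a"
      by (simp add: integral_unique)
    then show "integral {0..x} r = (\<Sum>i\<le>2. c i * x ^ i)"
      unfolding sum2 c_def F_def by simp
  qed
qed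

theorem theorem3p3:
  fixes f w wh uh :: "real \<Rightarrow> real" and wbar :: real and n :: nat
  assumes f_cont: "continuous_on {0..1} f"
    and w_def: "\<And>x. w x = integral {0..x} f"
    and wbar_def: "wbar = integral {0..1} w"
    and n2: "n \<ge> 2"
    and wh_in: "wh \<in> Vh n"
    and uh_in: "uh \<in> Mh n"
    and eq1: "\<And>vh. vh \<in> Vh n \<Longrightarrow>
               L2ip (deriv wh) (deriv vh) + L2ip (deriv uh) vh = L2ip f vh"
    and eq2: "\<And>qh. qh \<in> Mh n \<Longrightarrow> L2ip wh (deriv qh) = 0"
  shows "is_L2_proj (Mh_tilde n) (\<lambda>x. w x - wbar)
           (\<lambda>x. uh x - integral {0..1} uh)"
proof -
  define ubar where "ubar = integral {0..1} uh"
  define N where "N = (\<lambda>j. real j / real n) ` {..n}"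
  have finN: "finite N" unfolding N_def by simp
  have n1: "n \<ge> 1" using n2 by simp
  have whp: "piecewise_poly n 2 wh" "wh 0 = 0" "wh 1 = 0" using wh_in by (auto simp: Vh_def)
  have uhp: "piecewise_poly n 1 uh" "uh 0 = 0" "uh 1 = 0" using uh_in by (auto simp: Mh_def)
  have whc: "continuous_on {0..1} wh" using whp unfolding piecewise_poly_def by blast
  have uhc: "continuous_on {0..1} uh" using uhp unfolding piecewise_poly_def by blast
  have w_eq: "w = (\<lambda>x. integral {0..x} f)" using w_def by auto
  have wc: "continuous_on {0..1} w"
    unfolding w_eq by (intro indefinite_integral_continuous_1 integrable_continuous_interval f_cont)
  have w_der: "(w has_real_derivative f x) (at x)" if "x \<in> {0<..<1}" for x
  proof -
    have "(w has_real_derivative f x) (at x within {0..1})"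
      unfolding w_eq using integral_has_real_derivative[OF f_cont, of x] that by auto
    then show ?thesis using that by (simp add: at_within_Icc_at)
  qed
  have memb: "(\<lambda>x. uh x - ubar) \<in> Mh_tilde n"
    unfolding Mh_tilde_def using pp_shift[OF uhp(1)] uhp by auto
  have orth: "L2ip (\<lambda>x. w x - wbar - (uh x - ubar)) q = 0" if qM: "q \<in> Mh_tilde n" for q
  proof -
    have qp: "piecewise_poly n 1 q" "q 0 = q 1" using qM by (auto simp: Mh_tilde_def)
    have qc: "continuous_on {0..1} q" using qp unfolding piecewise_poly_def by blast
    define c where "c = integral {0..1} q"
    define r where "r x = q x - c" for x
    define v where "v x = integral {0..x} r" for x
    have rc: "continuous_on {0..1} r" unfolding r_def by (intro continuous_intros qc)
    have v_der: "(v has_real_derivative r x) (at x)" if "x \<in> {0<..<1}" for x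
    proof -
      have "(v has_real_derivative r x) (at x within {0..1})"
        unfolding v_def[abs_def] using integral_has_real_derivative[OF rc, of x] that by auto
      then show ?thesis using that by (simp add: at_within_Icc_at)
    qed
    have vc: "continuous_on {0..1} v"
      unfolding v_def[abs_def] by (intro indefinite_integral_continuous_1 integrable_continuous_interval rc)
    have qint: "(q has_integral c) {0..1}"
      unfolding c_def using integrable_continuous_interval[OF qc] by (simp add: integrable_integral)
    have rint: "(r has_integral 0) {0..1}"
      unfolding r_def[abs_def] using has_integral_diff[OF qint has_integral_const_real[of c 0 1]] by simp
    have v0: "v 0 = 0" unfolding v_def by simp
    have v1: "v 1 = 0" unfolding v_def using rint by (simp add: integral_unique)
    have vpp: "piecewise_poly n 2 v"
      unfolding piecewise_poly_def
    proof (intro conjI ballI vc)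
      fix j assume j: "j \<in> {1..n}"
      define a where "a = (real j - 1)/real n"
      define b where "b = real j/real n"
      obtain cq where cq: "\<forall>x\<in>{a..b}. q x = (\<Sum>i\<le>1. cq i * x ^ i)"
        using qp(1) j unfolding piecewise_poly_def a_def b_def by blast
      have ab: "0 \<le> a" "a \<le> b" "b \<le> 1" unfolding a_def b_def using cell_bounds[OF j] by auto
      have "\<forall>x\<in>{a..b}. r x = (cq 0 - c) + cq 1 * x"
        using cq unfolding r_def sum1 by auto
      from v_poly_cell[OF rc ab this]
      show "\<exists>c. \<forall>x\<in>{(real j - 1) / real n..real j / real n}. v x = (\<Sum>i\<le>2. c i * x ^ i)"
        unfolding v_def a_def b_def by simp
    qed
    have vV: "v \<in> Vh n" unfolding Vh_def using vpp v0 v1 by auto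
    note E1 = eq1[OF vV]
    have dv: "deriv v x = r x" if "x \<in> {0<..<1}" for x
      using v_der[OF that] by (rule DERIV_imp_deriv)
    have dq: "(q has_real_derivative deriv q x) (at x)" if "x \<in> {0<..<1} - N" for x
      using pp_deriv[OF qp(1) n1] that unfolding N_def by auto
    have dr: "(r has_real_derivative deriv q x) (at x)" if "x \<in> {0<..<1} - N" for x
      unfolding r_def[abs_def] using DERIV_diff[OF dq[OF that] DERIV_const] by simp
    have dwh: "(wh has_real_derivative deriv wh x) (at x)" if "x \<in> {0<..<1} - N" for x
      using pp_deriv[OF whp(1) n1] that unfolding N_def by auto
    have duh: "(uh has_real_derivative deriv uh x) (at x)" if "x \<in> {0<..<1} - N" for x
      using pp_deriv[OF uhp(1) n1] that unfolding N_def by auto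
    define q0 where "q0 x = q x - q 0" for x
    have q0M: "q0 \<in> Mh n" unfolding Mh_def q0_def[abs_def] using pp_shift[OF qp(1)] qp(2) by auto
    have dq0: "deriv q0 x = deriv q x" if "x \<in> {0..1} - N" for x
    proof -
      have "0 \<in> N" unfolding N_def by (rule image_eqI[of _ _ 0]) auto
      moreover have "1 \<in> N" unfolding N_def using n1 by (intro image_eqI[of _ _ n]) auto
      ultimately have "x \<noteq> 0" "x \<noteq> 1" using that by auto
      then have x: "x \<in> {0<..<1} - N" using that by auto
      show ?thesis unfolding q0_def[abs_def]
        using DERIV_diff[OF dq[OF x] DERIV_const] by (simp add: DERIV_imp_deriv)
    qed
    have "L2ip wh (deriv q0) = integral {0..1} (\<lambda>x. wh x * deriv q x)"
      unfolding L2ip_def using finN dq0 by (intro integral_spike[of N]) (auto intro: negligible_finite)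
    then have I0: "integral {0..1} (\<lambda>x. wh x * deriv q x) = 0" using eq2[OF q0M] by simp
    have IP1: "((\<lambda>x. wh x * deriv q x) has_integral (wh 1 * r 1 - wh 0 * r 0 - 0)) {0..1}"
      using whp(2,3) I0 integrable_integral[OF pp_int[OF qp(1) n1 whc]] by simp
    have T1': "((\<lambda>x. deriv wh x * r x) has_integral 0) {0..1}"
      proof (rule integration_by_parts_interior_strong[OF bounded_bilinear_mult finN _ whc rc _ _ IP1])
        show "(0::real) \<le> 1" by simp
      next
        fix x :: real assume "x \<in> {0<..<1} - N"
        then show "(wh has_vector_derivative deriv wh x) (at x)"
          using dwh has_real_derivative_iff_has_vector_derivative by blast
      next
        fix x :: real assume "x \<in> {0<..<1} - N"
        then show "(r has_vector_derivative deriv q x) (at x)"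
          using dr has_real_derivative_iff_has_vector_derivative by blast
      qed
    have T1: "L2ip (deriv wh) (deriv v) = 0"
    proof -
      have "L2ip (deriv wh) (deriv v) = integral {0..1} (\<lambda>x. deriv wh x * r x)"
        unfolding L2ip_def using dv by (intro integral_spike[of "{0,1}"]) auto
      then show ?thesis using T1' by (simp add: integral_unique)
    qed
    define Iu where "Iu = integral {0..1} (\<lambda>x. uh x * r x)"
    have Iu: "((\<lambda>x. uh x * r x) has_integral Iu) {0..1}"
      unfolding Iu_def by (intro integrable_integral integrable_continuous_interval continuous_intros uhc rc)
    have IP2: "((\<lambda>x. uh x * r x) has_integral (uh 1 * v 1 - uh 0 * v 0 - (- Iu))) {0..1}"
      using Iu v0 v1 by simp
    have "((\<lambda>x. deriv uh x * v x) has_integral (- Iu)) {0..1}"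
      proof (rule integration_by_parts_interior_strong[OF bounded_bilinear_mult finN _ uhc vc _ _ IP2])
        show "(0::real) \<le> 1" by simp
      next
        fix x :: real assume "x \<in> {0<..<1} - N"
        then show "(uh has_vector_derivative deriv uh x) (at x)"
          using duh has_real_derivative_iff_has_vector_derivative by blast
      next
        fix x :: real assume "x \<in> {0<..<1} - N"
        then show "(v has_vector_derivative r x) (at x)"
          using v_der has_real_derivative_iff_has_vector_derivative by blast
      qed
    then have T2: "L2ip (deriv uh) v = - Iu" unfolding L2ip_def by (simp add: integral_unique)
    define Iw where "Iw = integral {0..1} (\<lambda>x. w x * r x)"
    have Iw: "((\<lambda>x. w x * r x) has_integral Iw) {0..1}"
      unfolding Iw_def by (intro integrable_integral integrable_continuous_interval continuous_intros wc rc)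
    have IP3: "((\<lambda>x. w x * r x) has_integral (w 1 * v 1 - w 0 * v 0 - (- Iw))) {0..1}"
      using Iw v0 v1 by simp
    have "((\<lambda>x. f x * v x) has_integral (- Iw)) {0..1}"
      proof (rule integration_by_parts_interior_strong[OF bounded_bilinear_mult finite.emptyI _ wc vc _ _ IP3])
        show "(0::real) \<le> 1" by simp
      next
        fix x :: real assume "x \<in> {0<..<1} - {}"
        then show "(w has_vector_derivative f x) (at x)"
          using w_der has_real_derivative_iff_has_vector_derivative by blast
      next
        fix x :: real assume "x \<in> {0<..<1} - {}"
        then show "(v has_vector_derivative r x) (at x)"
          using v_der has_real_derivative_iff_has_vector_derivative by blast
      qed
    then have T3: "L2ip f v = - Iw" unfolding L2ip_def by (simp add: integral_unique)
    have IwIu: "Iw = Iu" using E1 T1 T2 T3 by simp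
    have wint: "(w has_integral wbar) {0..1}"
      unfolding wbar_def by (intro integrable_integral integrable_continuous_interval wc)
    have uint: "(uh has_integral ubar) {0..1}"
      unfolding ubar_def by (intro integrable_integral integrable_continuous_interval uhc)
    define K where "K = wbar - ubar"
    have H: "((\<lambda>x. (w x * r x - uh x * r x) + c * w x - c * uh x - K * q x) has_integral
              ((Iw - Iu) + c * wbar - c * ubar - K * c)) {0..1}"
      by (intro has_integral_diff has_integral_add has_integral_mult_right Iw Iu wint uint qint)
    have "(\<lambda>x. (w x * r x - uh x * r x) + c * w x - c * uh x - K * q x) =
          (\<lambda>x. (w x - wbar - (uh x - ubar)) * q x)"
      unfolding r_def K_def by (auto simp: algebra_simps)
    moreover have "(Iw - Iu) + c * wbar - c * ubar - K * c = 0"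
      unfolding K_def IwIu by (simp add: algebra_simps)
    ultimately show ?thesis using H unfolding L2ip_def by (simp add: integral_unique)
  qed
  show ?thesis
    unfolding is_L2_proj_def ubar_def[symmetric] using memb orth by auto
qed

end
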